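(* In the setting of the context, let $j\ge1$ and $d\ge1$ be integers. Assume there exists $m\ge1$ with $2^{m-1}>j$ and $d\in\mathcal E_m$. Then there exist integers $\alpha,\beta$ with $\alpha-\beta=d$, $P_j(\{\alpha\})>0$ and $P_j(\{\beta\})>0$.
   Context: Let $\pi_m\ge2$ ($m\ge1$) be integers and $\eta_{m,i}\ge0$ ($m\ge1$, $0\le i\le\pi_m-1$) integers; write $\eta_m:i\mapsto\eta_{m,i}$. $\overline Y=\prod_{m\ge1}\{0,\dots,\pi_m-1\}$ with product uniform measure $\overline\nu$ and odometer $\overline S$ (add $1$ to the first coordinate with carry to the right). $\gamma(\overline y)=\sum_{m=1}^{\overline t(\overline y)}\eta_{m,\overline y_m}$ where $\overline t(\overline y)$ is the smallest $t\ge1$ with $\overline y_t<\pi_t-1$. $P_j$ is the distribution under $\overline\nu$ of $\gamma+\gamma\circ\overline S+\dots+\gamma\circ\overline S^{j-1}$. $\mathcal S_m=\eta_m(\{0,\dots,\pi_m-2\})\cup\big(\eta_{m,\pi_m-1}+\eta_{m+1}(\{0,\dots,\pi_{m+1}-2\})\big)$, $\mathcal E_m=\mathcal S_m-\mathcal S_m$. *)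

theory Defs
  imports "HOL-Probability.Probability"
begin

text \<open>Coordinates are indexed by m \<ge> 1; points of Ybar are extensional functions on {1..}.\<close>

definition Ybar :: "(nat \<Rightarrow> nat) \<Rightarrow> (nat \<Rightarrow> nat) measure" where
  "Ybar \<pi> = PiM {1..} (\<lambda>m. measure_pmf (pmf_of_set {0..<\<pi> m}))"

text \<open>Odometer: add 1 to the first coordinate, carry to the right.\<close>
definition odo :: "(nat \<Rightarrow> nat) \<Rightarrow> (nat \<Rightarrow> nat) \<Rightarrow> (nat \<Rightarrow> nat)" where
  "odo \<pi> y = (\<lambda>m. if m = 0 then undefined
      else if (\<forall>i\<in>{1..<m}. y i = \<pi> i - 1)
           then (if y m = \<pi> m - 1 then 0 else y m + 1)
           else y m)"

definition tbar :: "(nat \<Rightarrow> nat) \<Rightarrow> (nat \<Rightarrow> nat) \<Rightarrow> nat" where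
  "tbar \<pi> y = (LEAST t. 1 \<le> t \<and> y t < \<pi> t - 1)"

text \<open>gamma; on the null set where no such t exists it is set to 0.\<close>
definition gam :: "(nat \<Rightarrow> nat) \<Rightarrow> (nat \<Rightarrow> nat \<Rightarrow> nat) \<Rightarrow> (nat \<Rightarrow> nat) \<Rightarrow> nat" where
  "gam \<pi> \<eta> y = (if \<exists>t\<ge>1. y t < \<pi> t - 1
      then (\<Sum>m=1..tbar \<pi> y. \<eta> m (y m)) else 0)"

definition birk :: "(nat \<Rightarrow> nat) \<Rightarrow> (nat \<Rightarrow> nat \<Rightarrow> nat) \<Rightarrow> nat \<Rightarrow> (nat \<Rightarrow> nat) \<Rightarrow> int" where
  "birk \<pi> \<eta> j y = int (\<Sum>i<j. gam \<pi> \<eta> ((odo \<pi> ^^ i) y))"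

definition Pj :: "(nat \<Rightarrow> nat) \<Rightarrow> (nat \<Rightarrow> nat \<Rightarrow> nat) \<Rightarrow> nat \<Rightarrow> int measure" where
  "Pj \<pi> \<eta> j = distr (Ybar \<pi>) (count_space UNIV) (birk \<pi> \<eta> j)"

definition Sset :: "(nat \<Rightarrow> nat) \<Rightarrow> (nat \<Rightarrow> nat \<Rightarrow> nat) \<Rightarrow> nat \<Rightarrow> int set" where
  "Sset \<pi> \<eta> m = (\<lambda>i. int (\<eta> m i)) ` {0..\<pi> m - 2}
      \<union> (\<lambda>i. int (\<eta> m (\<pi> m - 1)) + int (\<eta> (m+1) i)) ` {0..\<pi> (m+1) - 2}"

definition Eset :: "(nat \<Rightarrow> nat) \<Rightarrow> (nat \<Rightarrow> nat \<Rightarrow> nat) \<Rightarrow> nat \<Rightarrow> int set" where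
  "Eset \<pi> \<eta> m = {a - b | a b. a \<in> Sset \<pi> \<eta> m \<and> b \<in> Sset \<pi> \<eta> m}"

end

theory Submission
  imports Defs
begin

lemma space_Ybar: "space (Ybar \<pi>) = PiE {1..} (\<lambda>_. UNIV)"
  by (simp add: Ybar_def space_PiM)

lemma coord_meas: "(\<lambda>y. y k) \<in> measurable (Ybar \<pi>) (count_space UNIV)"
proof (cases "k \<ge> 1")
  case True
  have "(\<lambda>y. y k) \<in> measurable (Ybar \<pi>) (measure_pmf (pmf_of_set {0..<\<pi> k}))"
    unfolding Ybar_def using True by (intro measurable_component_singleton) auto
  then show ?thesis by (simp add: measurable_cong_sets[OF refl sets_measure_pmf_count_space])
next
  case False
  then have "k = 0" by simp
  then have "\<And>y. y \<in> space (Ybar \<pi>) \<Longrightarrow> y k = undefined"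
    by (auto simp: space_Ybar PiE_def extensional_def)
  then show ?thesis by (subst measurable_cong[where g="\<lambda>_. undefined"]) auto
qed

lemma cyl_sets:
  assumes "finite J"
  shows "{y \<in> space (Ybar \<pi>). \<forall>k\<in>J. y k = x k} \<in> sets (Ybar \<pi>)"
proof -
  have "\<And>k. {y \<in> space (Ybar \<pi>). y k = x k} \<in> sets (Ybar \<pi>)"
  proof -
    fix k
    have "(\<lambda>y. y k) -` {x k} \<inter> space (Ybar \<pi>) \<in> sets (Ybar \<pi>)"
      by (rule measurable_sets[OF coord_meas]) auto
    moreover have "(\<lambda>y. y k) -` {x k} \<inter> space (Ybar \<pi>) = {y \<in> space (Ybar \<pi>). y k = x k}" by auto
    ultimately show "{y \<in> space (Ybar \<pi>). y k = x k} \<in> sets (Ybar \<pi>)" by simp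
  qed
  then show ?thesis using assms by (intro sets.sets_Collect_finite_All) auto
qed

lemma fin_det_meas:
  fixes f :: "(nat \<Rightarrow> nat) \<Rightarrow> 'b::countable"
  assumes J: "finite J"
    and det: "\<And>y y'. y \<in> space (Ybar \<pi>) \<Longrightarrow> y' \<in> space (Ybar \<pi>) \<Longrightarrow> (\<forall>k\<in>J. y k = y' k) \<Longrightarrow> f y = f y'"
  shows "f \<in> measurable (Ybar \<pi>) (count_space UNIV)"
  unfolding measurable_count_space_eq2_countable
proof safe
  fix a
  let ?P = "f -` {a} \<inter> space (Ybar \<pi>)"
  let ?R = "(\<lambda>y. restrict y J) ` ?P"
  have eq: "?P = (\<Union>x\<in>?R. {y \<in> space (Ybar \<pi>). \<forall>k\<in>J. y k = x k})"
  proof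
    show "?P \<subseteq> (\<Union>x\<in>?R. {y \<in> space (Ybar \<pi>). \<forall>k\<in>J. y k = x k})" by force
    show "(\<Union>x\<in>?R. {y \<in> space (Ybar \<pi>). \<forall>k\<in>J. y k = x k}) \<subseteq> ?P"
    proof (rule subsetI)
      fix y assume "y \<in> (\<Union>x\<in>?R. {y \<in> space (Ybar \<pi>). \<forall>k\<in>J. y k = x k})"
      then obtain y0 where "y0 \<in> space (Ybar \<pi>)" "f y0 = a" "y \<in> space (Ybar \<pi>)" "\<forall>k\<in>J. y k = restrict y0 J k"
        by auto
      then show "y \<in> ?P" using det[of y y0] by auto
    qed
  qed
  have "?R \<subseteq> PiE J (\<lambda>_. UNIV)" by auto
  moreover have "countable (PiE J (\<lambda>_. UNIV::nat set))" using J by (intro countable_PiE) auto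
  ultimately have "countable ?R" by (rule countable_subset)
  then have "(\<Union>x\<in>?R. {y \<in> space (Ybar \<pi>). \<forall>k\<in>J. y k = x k}) \<in> sets (Ybar \<pi>)"
    using J by (intro sets.countable_UN') (auto intro: cyl_sets)
  then show "?P \<in> sets (Ybar \<pi>)" using eq by simp
qed simp

lemma odo_meas: "odo \<pi> \<in> measurable (Ybar \<pi>) (Ybar \<pi>)"
proof -
  have "(\<lambda>y m. odo \<pi> y m) \<in> measurable (Ybar \<pi>) (PiM {1..} (\<lambda>m. measure_pmf (pmf_of_set {0..<\<pi> m})))"
  proof (rule measurable_PiM_single')
    fix m :: nat assume "m \<in> {1..}"
    have "(\<lambda>y. odo \<pi> y m) \<in> measurable (Ybar \<pi>) (count_space UNIV)"
      by (rule fin_det_meas[of "{1..m}"]) (auto simp: odo_def)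
    then show "(\<lambda>y. odo \<pi> y m) \<in> measurable (Ybar \<pi>) (measure_pmf (pmf_of_set {0..<\<pi> m}))"
      by (simp add: measurable_cong_sets[OF refl sets_measure_pmf_count_space])
  next
    show "(\<lambda>y m. odo \<pi> y m) \<in> space (Ybar \<pi>) \<rightarrow> (\<Pi>\<^sub>E m\<in>{1..}. space (measure_pmf (pmf_of_set {0..<\<pi> m})))"
      by (auto simp: odo_def PiE_def extensional_def)
  qed
  then show ?thesis by (simp add: Ybar_def)
qed

lemma odo_pow_meas: "(odo \<pi> ^^ i) \<in> measurable (Ybar \<pi>) (Ybar \<pi>)"
  by (induction i) (auto intro: measurable_compose[OF _ odo_meas])

lemma gam_meas: "gam \<pi> \<eta> \<in> measurable (Ybar \<pi>) (count_space UNIV)"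
proof -
  have P: "(\<lambda>y. 1 \<le> i \<and> y i < \<pi> i - 1) \<in> measurable (Ybar \<pi>) (count_space UNIV)" for i
    by (rule fin_det_meas[of "{i}"]) auto
  have c: "Measurable.pred (Ybar \<pi>) (\<lambda>y. \<exists>t\<ge>1. y t < \<pi> t - 1)"
    by (rule pred_intros_countable, rule P)
  have t: "tbar \<pi> \<in> measurable (Ybar \<pi>) (count_space UNIV)"
    unfolding tbar_def by (rule measurable_Least, rule P)
  have s: "(\<lambda>y. \<Sum>m=1..tbar \<pi> y. \<eta> m (y m)) \<in> measurable (Ybar \<pi>) (count_space UNIV)"
  proof (rule measurable_compose_countable[OF _ t, where f="\<lambda>n y. \<Sum>m=1..n. \<eta> m (y m)"])
    fix n :: nat
    show "(\<lambda>y. \<Sum>m=1..n. \<eta> m (y m)) \<in> measurable (Ybar \<pi>) (count_space UNIV)"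
      by (rule fin_det_meas[of "{1..n}"]) auto
  qed
  show ?thesis unfolding gam_def[abs_def]
    by (rule measurable_If[OF s _ c[unfolded pred_def]]) simp
qed

lemma add_meas:
  fixes F G :: "'a \<Rightarrow> nat"
  assumes F: "F \<in> measurable M (count_space UNIV)" and G: "G \<in> measurable M (count_space UNIV)"
  shows "(\<lambda>x. F x + G x) \<in> measurable M (count_space UNIV)"
proof (rule measurable_compose_countable[OF _ F, where f="\<lambda>n x. n + G x"])
  fix n :: nat
  show "(\<lambda>x. n + G x) \<in> measurable M (count_space UNIV)"
    by (rule measurable_compose[OF G]) simp
qed

lemma birk_meas: "birk \<pi> \<eta> j \<in> measurable (Ybar \<pi>) (count_space UNIV)"
proof -
  have "(\<lambda>y. \<Sum>i<j. gam \<pi> \<eta> ((odo \<pi> ^^ i) y)) \<in> measurable (Ybar \<pi>) (count_space UNIV)"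
  proof (induction j)
    case 0 then show ?case by simp
  next
    case (Suc j)
    have "(\<lambda>y. gam \<pi> \<eta> ((odo \<pi> ^^ j) y)) \<in> measurable (Ybar \<pi>) (count_space UNIV)"
      by (rule measurable_compose[OF odo_pow_meas gam_meas])
    then show ?case using add_meas[OF Suc] by simp
  qed
  then show ?thesis unfolding birk_def[abs_def] by (rule measurable_compose) simp
qed

lemma Ybar_prob: "prob_space (Ybar \<pi>)"
  unfolding Ybar_def by (intro prob_space_PiM) (auto intro: prob_space_measure_pmf)

lemma cyl_pos:
  assumes J: "finite J" "J \<subseteq> {1..}" and x: "\<forall>k\<in>J. x k < \<pi> k"
  shows "emeasure (Ybar \<pi>) {y \<in> space (Ybar \<pi>). \<forall>k\<in>J. y k = x k} > 0"
proof -
  have eq: "{y \<in> space (Ybar \<pi>). \<forall>k\<in>J. y k = x k}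
     = prod_emb {1..} (\<lambda>m. measure_pmf (pmf_of_set {0..<\<pi> m})) J (PiE J (\<lambda>k. {x k}))"
    by (auto simp: prod_emb_def Ybar_def space_PiM PiE_def extensional_def Pi_def restrict_def)
  have "emeasure (Ybar \<pi>) {y \<in> space (Ybar \<pi>). \<forall>k\<in>J. y k = x k}
     = (\<Prod>k\<in>J. emeasure (measure_pmf (pmf_of_set {0..<\<pi> k})) {x k})"
    unfolding eq
    by (unfold Ybar_def, rule emeasure_PiM_emb) (use J in \<open>auto intro: prob_space_measure_pmf\<close>)
  also have "\<dots> = (\<Prod>k\<in>J. ennreal (1 / real (\<pi> k)))"
  proof (rule prod.cong[OF refl])
    fix k assume "k \<in> J"
    then have "x k < \<pi> k" using x by auto
    then have ne: "{0..<\<pi> k} \<noteq> {}" by auto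
    show "emeasure (measure_pmf (pmf_of_set {0..<\<pi> k})) {x k} = ennreal (1 / real (\<pi> k))"
      using \<open>x k < \<pi> k\<close> ne by (simp add: emeasure_pmf_single pmf_of_set)
  qed
  also have "\<dots> = ennreal (\<Prod>k\<in>J. 1 / real (\<pi> k))"
    by (rule prod_ennreal) simp
  also have "\<dots> > 0"
  proof -
    have "\<forall>k\<in>J. 1 / real (\<pi> k) > 0" using x by auto
    then have "(\<Prod>k\<in>J. 1 / real (\<pi> k)) > 0" by (intro prod_pos) auto
    then show ?thesis by simp
  qed
  finally show ?thesis .
qed

lemma Pj_pos:
  assumes J: "finite J" "J \<subseteq> {1..}" and x: "\<forall>k\<in>J. x k < \<pi> k"
    and c: "\<And>y. y \<in> space (Ybar \<pi>) \<Longrightarrow> \<forall>k\<in>J. y k = x k \<Longrightarrow> birk \<pi> \<eta> j y = \<alpha>"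
  shows "measure (Pj \<pi> \<eta> j) {\<alpha>} > 0"
proof -
  interpret P: prob_space "Ybar \<pi>" by (rule Ybar_prob)
  let ?A = "{y \<in> space (Ybar \<pi>). \<forall>k\<in>J. y k = x k}"
  let ?B = "birk \<pi> \<eta> j -` {\<alpha>} \<inter> space (Ybar \<pi>)"
  have m: "measure (Pj \<pi> \<eta> j) {\<alpha>} = measure (Ybar \<pi>) ?B"
    unfolding Pj_def by (rule measure_distr[OF birk_meas]) auto
  have Bs: "?B \<in> sets (Ybar \<pi>)" by (rule measurable_sets[OF birk_meas]) auto
  have "?A \<subseteq> ?B" using c by auto
  then have "measure (Ybar \<pi>) ?A \<le> measure (Ybar \<pi>) ?B"
    using Bs by (intro P.finite_measure_mono) auto
  moreover have "measure (Ybar \<pi>) ?A > 0"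
    using cyl_pos[OF J x] by (simp add: P.emeasure_eq_measure)
  ultimately show ?thesis using m by simp
qed

definition W :: "(nat \<Rightarrow> nat) \<Rightarrow> nat \<Rightarrow> nat" where
  "W \<pi> k = (\<Prod>l\<in>{1..<k}. \<pi> l)"

definition vv :: "(nat \<Rightarrow> nat) \<Rightarrow> nat \<Rightarrow> (nat \<Rightarrow> nat) \<Rightarrow> nat" where
  "vv \<pi> n z = (\<Sum>k=1..n. z k * W \<pi> k)"

lemma W_Suc: "W \<pi> (Suc k) = (if k \<ge> 1 then W \<pi> k * \<pi> k else 1)"
  by (auto simp: W_def prod.atLeastLessThan_Suc)

lemma W_1[simp]: "W \<pi> (Suc 0) = 1" by (simp add: W_def)

lemma W_ge:
  assumes "\<forall>m\<ge>1. \<pi> m \<ge> 2"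
  shows "W \<pi> (Suc n) \<ge> 2 ^ n"
proof (induction n)
  case 0 then show ?case by (simp add: W_1)
next
  case (Suc n)
  have "W \<pi> (Suc (Suc n)) = W \<pi> (Suc n) * \<pi> (Suc n)" by (simp add: W_Suc)
  moreover have "\<pi> (Suc n) \<ge> 2" using assms by auto
  ultimately show ?case using Suc mult_le_mono by (metis power_Suc2)
qed

lemma vv_Suc: "vv \<pi> (Suc n) z = vv \<pi> n z + z (Suc n) * W \<pi> (Suc n)"
  by (simp add: vv_def)

lemma vv_0: "vv \<pi> 0 z = 0" by (simp add: vv_def)

lemma vv_allmax:
  assumes "\<forall>m\<ge>1. \<pi> m \<ge> 2" and "\<forall>k\<in>{1..n}. z k = \<pi> k - 1"
  shows "vv \<pi> n z + 1 = W \<pi> (Suc n)"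
  using assms(2)
proof (induction n)
  case 0 then show ?case by (simp add: vv_0 W_1)
next
  case (Suc n)
  then have IH: "vv \<pi> n z + 1 = W \<pi> (Suc n)" by auto
  have z: "z (Suc n) = \<pi> (Suc n) - 1" using Suc.prems by auto
  have p: "\<pi> (Suc n) \<ge> 2" using assms(1) by auto
  have "vv \<pi> (Suc n) z + 1 = W \<pi> (Suc n) + (\<pi> (Suc n) - 1) * W \<pi> (Suc n)"
    using IH z by (simp add: vv_Suc)
  also have "\<dots> = \<pi> (Suc n) * W \<pi> (Suc n)" using p
    by (metis Suc_diff_1 less_le_trans mult_Suc pos2 add.commute)
  also have "\<dots> = W \<pi> (Suc (Suc n))" by (simp add: W_Suc)
  finally show ?case .
qed

lemma odo_at: "k \<ge> 1 \<Longrightarrow> odo \<pi> z k = (if (\<forall>i\<in>{1..<k}. z i = \<pi> i - 1)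
           then (if z k = \<pi> k - 1 then 0 else z k + 1) else z k)"
  by (simp add: odo_def)

lemma vv_odo:
  assumes "\<forall>m\<ge>1. \<pi> m \<ge> 2" and "\<forall>k\<in>{1..n}. z k < \<pi> k"
  shows "vv \<pi> n (odo \<pi> z) = (if (\<forall>k\<in>{1..n}. z k = \<pi> k - 1) then 0 else vv \<pi> n z + 1)"
  using assms(2)
proof (induction n)
  case 0 then show ?case by (simp add: vv_0)
next
  case (Suc n)
  then have IH: "vv \<pi> n (odo \<pi> z) = (if (\<forall>k\<in>{1..n}. z k = \<pi> k - 1) then 0 else vv \<pi> n z + 1)"
    by auto
  have o: "odo \<pi> z (Suc n) = (if (\<forall>i\<in>{1..n}. z i = \<pi> i - 1)
           then (if z (Suc n) = \<pi> (Suc n) - 1 then 0 else z (Suc n) + 1) else z (Suc n))"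
    using odo_at[of "Suc n" \<pi> z] by (simp add: atLeastLessThanSuc_atLeastAtMost)
  have all: "(\<forall>k\<in>{1..Suc n}. z k = \<pi> k - 1) \<longleftrightarrow> (\<forall>k\<in>{1..n}. z k = \<pi> k - 1) \<and> z (Suc n) = \<pi> (Suc n) - 1"
    by (auto simp: le_Suc_eq)
  show ?case
  proof (cases "\<forall>k\<in>{1..n}. z k = \<pi> k - 1")
    case True
    have va: "vv \<pi> n z + 1 = W \<pi> (Suc n)" using vv_allmax[OF assms(1) True] .
    show ?thesis
    proof (cases "z (Suc n) = \<pi> (Suc n) - 1")
      case True2: True
      then show ?thesis using True IH o all by (simp add: vv_Suc)
    next
      case False
      then have "vv \<pi> (Suc n) (odo \<pi> z) = (z (Suc n) + 1) * W \<pi> (Suc n)"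
        using True IH o by (simp add: vv_Suc)
      also have "\<dots> = vv \<pi> (Suc n) z + 1" using va by (simp add: vv_Suc algebra_simps)
      finally show ?thesis using False all by simp
    qed
  next
    case False
    then have o2: "odo \<pi> z (Suc n) = z (Suc n)" using o by (simp only: False if_False)
    have a2: "\<not> (\<forall>k\<in>{1..Suc n}. z k = \<pi> k - 1)" using all False by simp
    have i2: "vv \<pi> n (odo \<pi> z) = vv \<pi> n z + 1" using IH False by simp
    show ?thesis using o2 a2 i2 by (simp only: vv_Suc if_False)
  qed
qed

lemma odo_valid:
  assumes "\<forall>m\<ge>1. \<pi> m \<ge> 2" and "\<forall>k\<in>{1..n}. z k < \<pi> k"
  shows "\<forall>k\<in>{1..n}. odo \<pi> z k < \<pi> k"
proof
  fix k assume k: "k \<in> {1..n}"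
  then have "z k < \<pi> k" "\<pi> k \<ge> 2" using assms by auto
  then show "odo \<pi> z k < \<pi> k" using k by (auto simp: odo_at)
qed

lemma odo_agree:
  assumes "\<forall>k\<in>{1..n}. y k = y' k"
  shows "\<forall>k\<in>{1..n}. odo \<pi> y k = odo \<pi> y' k"
proof
  fix k assume k: "k \<in> {1..n}"
  then have "\<forall>i\<in>{1..<k}. y i = y' i" "y k = y' k" using assms by auto
  then show "odo \<pi> y k = odo \<pi> y' k" using k by (simp add: odo_at)
qed

lemma iter_agree:
  assumes "\<forall>k\<in>{1..n}. y k = y' k"
  shows "\<forall>k\<in>{1..n}. (odo \<pi> ^^ i) y k = (odo \<pi> ^^ i) y' k"
proof (induction i)
  case 0 then show ?case using assms by simp
next
  case (Suc i)
  then show ?case using odo_agree[OF Suc] by simp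
qed

lemma iter_vv:
  assumes pi: "\<forall>m\<ge>1. \<pi> m \<ge> 2" and am: "\<forall>k\<in>{1..n}. y k = \<pi> k - 1"
    and i: "1 \<le> i" "i < W \<pi> (Suc n)"
  shows "(\<forall>k\<in>{1..n}. (odo \<pi> ^^ i) y k < \<pi> k) \<and> vv \<pi> n ((odo \<pi> ^^ i) y) = i - 1"
  using i
proof (induction i rule: nat_induct_at_least)
  case base
  have yv: "\<forall>k\<in>{1..n}. y k < \<pi> k"
  proof
    fix k assume "k \<in> {1..n}" then show "y k < \<pi> k" using am pi by (auto intro: diff_less)
  qed
  show ?case using odo_valid[OF pi yv] vv_odo[OF pi yv] am by simp
next
  case (Suc i)
  then have IH: "\<forall>k\<in>{1..n}. (odo \<pi> ^^ i) y k < \<pi> k" "vv \<pi> n ((odo \<pi> ^^ i) y) = i - 1" by auto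
  have na: "\<not> (\<forall>k\<in>{1..n}. (odo \<pi> ^^ i) y k = \<pi> k - 1)"
  proof
    assume "\<forall>k\<in>{1..n}. (odo \<pi> ^^ i) y k = \<pi> k - 1"
    from vv_allmax[OF pi this] IH(2) Suc.hyps Suc.prems show False by simp
  qed
  show ?case using odo_valid[OF pi IH(1)] vv_odo[OF pi IH(1)] na IH(2) Suc.hyps by simp
qed

lemma gam_agree:
  assumes ag: "\<forall>k\<in>{1..N}. y k = y' k" and t: "t \<in> {1..N}" "y t < \<pi> t - 1"
  shows "gam \<pi> \<eta> y = gam \<pi> \<eta> y'"
proof -
  have ex: "\<exists>t\<ge>1. y t < \<pi> t - 1" using t by auto
  have ex': "\<exists>t\<ge>1. y' t < \<pi> t - 1" using t ag by force
  let ?P = "\<lambda>y t. 1 \<le> t \<and> y t < \<pi> t - 1"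
  have Pt: "?P y (tbar \<pi> y)" unfolding tbar_def by (rule LeastI[of _ t]) (use t in auto)
  have le: "tbar \<pi> y \<le> t" unfolding tbar_def by (rule Least_le) (use t in auto)
  have eqt: "tbar \<pi> y' = tbar \<pi> y"
    unfolding tbar_def[of \<pi> y']
  proof (rule Least_equality)
    show "?P y' (tbar \<pi> y)" using Pt le t ag by auto
  next
    fix s assume s: "?P y' s"
    show "tbar \<pi> y \<le> s"
    proof (cases "s \<le> N")
      case True
      then have "?P y s" using s ag by auto
      then show ?thesis unfolding tbar_def by (rule Least_le)
    next
      case False then show ?thesis using le t by auto
    qed
  qed
  have "(\<Sum>m=1..tbar \<pi> y. \<eta> m (y m)) = (\<Sum>m=1..tbar \<pi> y. \<eta> m (y' m))"
    using le t ag by (intro sum.cong) auto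
  then show ?thesis using ex ex' eqt by (simp add: gam_def)
qed

lemma birk_split:
  assumes "j \<ge> 1"
  shows "birk \<pi> \<eta> j y = int (gam \<pi> \<eta> y) + int (\<Sum>i\<in>{1..<j}. gam \<pi> \<eta> ((odo \<pi> ^^ i) y))"
proof -
  have "{..<j} = insert 0 {1..<j}" using assms by auto
  then show ?thesis by (simp add: birk_def)
qed

lemma R_agree:
  assumes pi: "\<forall>m\<ge>1. \<pi> m \<ge> 2"
    and am: "\<forall>k\<in>{1..n}. y k = \<pi> k - 1" and am': "\<forall>k\<in>{1..n}. y' k = \<pi> k - 1"
    and j: "j \<le> W \<pi> (Suc n)"
  shows "(\<Sum>i\<in>{1..<j}. gam \<pi> \<eta> ((odo \<pi> ^^ i) y)) = (\<Sum>i\<in>{1..<j}. gam \<pi> \<eta> ((odo \<pi> ^^ i) y'))"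
proof (rule sum.cong[OF refl])
  fix i assume i: "i \<in> {1..<j}"
  have ag: "\<forall>k\<in>{1..n}. y k = y' k" using am am' by auto
  have iv: "(\<forall>k\<in>{1..n}. (odo \<pi> ^^ i) y k < \<pi> k) \<and> vv \<pi> n ((odo \<pi> ^^ i) y) = i - 1"
    using iter_vv[OF pi am, of i] i j by auto
  have na: "\<not> (\<forall>k\<in>{1..n}. (odo \<pi> ^^ i) y k = \<pi> k - 1)"
  proof
    assume "\<forall>k\<in>{1..n}. (odo \<pi> ^^ i) y k = \<pi> k - 1"
    from vv_allmax[OF pi this] iv i j show False by simp
  qed
  then obtain t where t: "t \<in> {1..n}" "(odo \<pi> ^^ i) y t \<noteq> \<pi> t - 1" by auto
  moreover have "(odo \<pi> ^^ i) y t < \<pi> t" using iv t by auto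
  ultimately have "(odo \<pi> ^^ i) y t < \<pi> t - 1" by linarith
  then show "gam \<pi> \<eta> ((odo \<pi> ^^ i) y) = gam \<pi> \<eta> ((odo \<pi> ^^ i) y')"
    using gam_agree[OF iter_agree[OF ag] t(1)] by blast
qed

lemma gam_at:
  assumes t: "1 \<le> t" "y t < \<pi> t - 1" and lt: "\<forall>k\<in>{1..<t}. \<not> y k < \<pi> k - 1"
  shows "gam \<pi> \<eta> y = (\<Sum>k=1..t. \<eta> k (y k))"
proof -
  have "tbar \<pi> y = t" unfolding tbar_def
  proof (rule Least_equality)
    show "1 \<le> t \<and> y t < \<pi> t - 1" using t by auto
  next
    fix s assume "1 \<le> s \<and> y s < \<pi> s - 1"
    then show "t \<le> s" using lt by (meson atLeastLessThan_iff not_le)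
  qed
  then show ?thesis using t by (auto simp: gam_def)
qed

lemma S_cyl:
  assumes pi: "\<forall>m\<ge>1. \<pi> m \<ge> 2" and s: "s \<in> Sset \<pi> \<eta> (Suc n)"
  shows "\<exists>x. (\<forall>k\<in>{1..Suc (Suc n)}. x k < \<pi> k) \<and> (\<forall>k\<in>{1..n}. x k = \<pi> k - 1) \<and>
     (\<forall>y. (\<forall>k\<in>{1..Suc (Suc n)}. y k = x k) \<longrightarrow>
        int (gam \<pi> \<eta> y) = int (\<Sum>k=1..n. \<eta> k (\<pi> k - 1)) + s)"
proof -
  have p1: "\<pi> (Suc n) \<ge> 2" and p2: "\<pi> (Suc (Suc n)) \<ge> 2" using pi by auto
  have pk: "\<pi> k - 1 < \<pi> k" if "k \<ge> 1" for k
  proof -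
    have "\<pi> k \<ge> 2" using pi that by auto
    then show ?thesis by simp
  qed
  from s consider (a) i where "i \<in> {0..\<pi> (Suc n) - 2}" "s = int (\<eta> (Suc n) i)"
    | (b) i where "i \<in> {0..\<pi> (Suc (Suc n)) - 2}"
        "s = int (\<eta> (Suc n) (\<pi> (Suc n) - 1)) + int (\<eta> (Suc (Suc n)) i)"
    unfolding Sset_def by auto
  then show ?thesis
  proof cases
    case a
    define x where "x = (\<lambda>k. if k \<le> n then \<pi> k - 1 else if k = Suc n then i else 0)"
    show ?thesis
    proof (intro exI conjI allI impI)
      show "\<forall>k\<in>{1..Suc (Suc n)}. x k < \<pi> k"
        using a p1 p2 pk by (auto simp: x_def le_Suc_eq)
      show "\<forall>k\<in>{1..n}. x k = \<pi> k - 1" by (auto simp: x_def)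
      fix y assume ag: "\<forall>k\<in>{1..Suc (Suc n)}. y k = x k"
      have g: "gam \<pi> \<eta> y = (\<Sum>k=1..Suc n. \<eta> k (y k))"
      proof (rule gam_at)
        show "y (Suc n) < \<pi> (Suc n) - 1" using ag a p1 by (auto simp: x_def)
        show "\<forall>k\<in>{1..<Suc n}. \<not> y k < \<pi> k - 1" using ag by (auto simp: x_def)
      qed simp
      have "(\<Sum>k=1..n. \<eta> k (y k)) = (\<Sum>k=1..n. \<eta> k (\<pi> k - 1))"
        using ag by (intro sum.cong) (auto simp: x_def)
      moreover have "y (Suc n) = i" using ag by (auto simp: x_def)
      ultimately show "int (gam \<pi> \<eta> y) = int (\<Sum>k=1..n. \<eta> k (\<pi> k - 1)) + s"
        using g a by simp
    qed
  next
    case b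
    define x where "x = (\<lambda>k. if k \<le> n then \<pi> k - 1 else if k = Suc n then \<pi> k - 1 else i)"
    show ?thesis
    proof (intro exI conjI allI impI)
      show "\<forall>k\<in>{1..Suc (Suc n)}. x k < \<pi> k"
        using b p1 p2 pk by (auto simp: x_def le_Suc_eq)
      show "\<forall>k\<in>{1..n}. x k = \<pi> k - 1" by (auto simp: x_def)
      fix y assume ag: "\<forall>k\<in>{1..Suc (Suc n)}. y k = x k"
      have g: "gam \<pi> \<eta> y = (\<Sum>k=1..Suc (Suc n). \<eta> k (y k))"
      proof (rule gam_at)
        show "y (Suc (Suc n)) < \<pi> (Suc (Suc n)) - 1" using ag b p2 by (auto simp: x_def)
        show "\<forall>k\<in>{1..<Suc (Suc n)}. \<not> y k < \<pi> k - 1" using ag by (auto simp: x_def less_Suc_eq)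
      qed simp
      have "(\<Sum>k=1..n. \<eta> k (y k)) = (\<Sum>k=1..n. \<eta> k (\<pi> k - 1))"
        using ag by (intro sum.cong) (auto simp: x_def)
      moreover have "y (Suc n) = \<pi> (Suc n) - 1" "y (Suc (Suc n)) = i" using ag by (auto simp: x_def)
      ultimately show "int (gam \<pi> \<eta> y) = int (\<Sum>k=1..n. \<eta> k (\<pi> k - 1)) + s"
        using g b by simp
    qed
  qed
qed

theorem mainTheorem16:
  fixes \<pi> :: "nat \<Rightarrow> nat" and \<eta> :: "nat \<Rightarrow> nat \<Rightarrow> nat" and j :: nat and d :: int
  assumes "\<forall>m\<ge>1. \<pi> m \<ge> 2"
    and "j \<ge> 1" and "d \<ge> 1"
    and "\<exists>m\<ge>1. 2 ^ (m - 1) > j \<and> d \<in> Eset \<pi> \<eta> m"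
  shows "\<exists>\<alpha> \<beta> :: int. \<alpha> - \<beta> = d \<and> measure (Pj \<pi> \<eta> j) {\<alpha>} > 0
           \<and> measure (Pj \<pi> \<eta> j) {\<beta>} > 0"
proof -
  note pi = assms(1)
  obtain m where m: "m \<ge> 1" "2 ^ (m - 1) > j" "d \<in> Eset \<pi> \<eta> m" using assms(4) by blast
  define n where "n = m - 1"
  have mn: "m = Suc n" using m(1) n_def by simp
  have jW: "j \<le> W \<pi> (Suc n)" using W_ge[OF pi, of n] m(2) n_def by simp
  obtain a b where ab: "d = a - b" "a \<in> Sset \<pi> \<eta> (Suc n)" "b \<in> Sset \<pi> \<eta> (Suc n)"
    using m(3) mn unfolding Eset_def by auto
  define y0 where "y0 = (\<lambda>k::nat. \<pi> k - 1)"
  define C where "C = int (\<Sum>k=1..n. \<eta> k (\<pi> k - 1))"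
  define R0 where "R0 = int (\<Sum>i\<in>{1..<j}. gam \<pi> \<eta> ((odo \<pi> ^^ i) y0))"
  have key: "measure (Pj \<pi> \<eta> j) {C + s + R0} > 0" if s: "s \<in> Sset \<pi> \<eta> (Suc n)" for s
  proof -
    obtain x where x: "\<forall>k\<in>{1..Suc (Suc n)}. x k < \<pi> k" "\<forall>k\<in>{1..n}. x k = \<pi> k - 1"
      "\<forall>y. (\<forall>k\<in>{1..Suc (Suc n)}. y k = x k) \<longrightarrow> int (gam \<pi> \<eta> y) = C + s"
      using S_cyl[OF pi s] unfolding C_def by blast
    show ?thesis
    proof (rule Pj_pos[of "{1..Suc (Suc n)}" x])
      show "\<forall>k\<in>{1..Suc (Suc n)}. x k < \<pi> k" using x(1) .
      fix y assume y: "y \<in> space (Ybar \<pi>)" "\<forall>k\<in>{1..Suc (Suc n)}. y k = x k"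
      have am: "\<forall>k\<in>{1..n}. y k = \<pi> k - 1" using y(2) x(2) by auto
      have am0: "\<forall>k\<in>{1..n}. y0 k = \<pi> k - 1" by (simp add: y0_def)
      have "birk \<pi> \<eta> j y = int (gam \<pi> \<eta> y) + int (\<Sum>i\<in>{1..<j}. gam \<pi> \<eta> ((odo \<pi> ^^ i) y))"
        by (rule birk_split[OF assms(2)])
      also have "(\<Sum>i\<in>{1..<j}. gam \<pi> \<eta> ((odo \<pi> ^^ i) y)) = (\<Sum>i\<in>{1..<j}. gam \<pi> \<eta> ((odo \<pi> ^^ i) y0))"
        by (rule R_agree[OF pi am am0 jW])
      finally show "birk \<pi> \<eta> j y = C + s + R0" using x(3) y(2) unfolding R0_def by simp
    qed auto
  qed
  show ?thesis
  proof (intro exI conjI)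
    show "(C + a + R0) - (C + b + R0) = d" using ab by simp
    show "measure (Pj \<pi> \<eta> j) {C + a + R0} > 0" by (rule key[OF ab(2)])
    show "measure (Pj \<pi> \<eta> j) {C + b + R0} > 0" by (rule key[OF ab(3)])
  qed
qed

end
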